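(* Let $(\Omega,\mathcal F,\mu)$ be a measure space and $p\in[1,\infty)$. If $\mathscr A\subset L^p(\Omega,\mathcal F,\mu)$ is uniformly integrable, then $\mathscr A$ is uniformly approximable.
   Context: All measures are assumed not identically zero. $\mathscr A\subset L^p$ is uniformly integrable if $\inf_{g\in L^p_+}\sup_{f\in\mathscr A}\int_{\{|f|>g\}}|f|^p\,d\mu=0$, where $L^p_+$ is the set of nonnegative functions in $L^p$. $\mathscr G_{p,k}$ is the set of functions $\sum_{i=1}^l a_i\mathbf 1_{A_i}\in L^p$ with $l\le k$, $\{A_i\}$ a measurable partition of $\Omega$, $a_i\in\mathbb R$. $N_{p,\varepsilon}(\mathscr A)=\inf\{k\ge1:\ \forall f\in\mathscr A\ \exists h\in\mathscr G_{p,k},\ \|f-h\|_p\le\varepsilon\}$ ($\inf\emptyset=\infty$); $\mathscr A$ is uniformly approximable if $N_{p,\varepsilon}(\mathscr A)<\infty$ for every $\varepsilon>0$. *)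

theory Defs
  imports "HOL-Analysis.Analysis"
begin

definition Lp :: "'a measure \<Rightarrow> real \<Rightarrow> ('a \<Rightarrow> real) set" where
  "Lp M p = {f \<in> borel_measurable M. integrable M (\<lambda>x. \<bar>f x\<bar> powr p)}"

definition Lp_plus :: "'a measure \<Rightarrow> real \<Rightarrow> ('a \<Rightarrow> real) set" where
  "Lp_plus M p = {g \<in> Lp M p. \<forall>x\<in>space M. 0 \<le> g x}"

definition Lp_norm :: "'a measure \<Rightarrow> real \<Rightarrow> ('a \<Rightarrow> real) \<Rightarrow> real" where
  "Lp_norm M p f = (\<integral>x. \<bar>f x\<bar> powr p \<partial>M) powr (1 / p)"

definition unif_integrable :: "'a measure \<Rightarrow> real \<Rightarrow> ('a \<Rightarrow> real) set \<Rightarrow> bool" where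
  "unif_integrable M p A \<longleftrightarrow>
     (INF g\<in>Lp_plus M p. SUP f\<in>A.
        (\<integral>\<^sup>+ x\<in>{x\<in>space M. \<bar>f x\<bar> > g x}. ennreal (\<bar>f x\<bar> powr p) \<partial>M)) = 0"

definition step_fun_set :: "'a measure \<Rightarrow> real \<Rightarrow> nat \<Rightarrow> ('a \<Rightarrow> real) set" where
  "step_fun_set M p k = {h \<in> Lp M p. \<exists>l \<le> k. \<exists>(S :: nat \<Rightarrow> 'a set) (a :: nat \<Rightarrow> real).
      (\<forall>i<l. S i \<in> sets M) \<and> disjoint_family_on S {..<l} \<and> (\<Union>i<l. S i) = space M \<and>
      (\<forall>x\<in>space M. h x = (\<Sum>i<l. a i * indicator (S i) x))}"

definition approx_number :: "'a measure \<Rightarrow> real \<Rightarrow> real \<Rightarrow> ('a \<Rightarrow> real) set \<Rightarrow> enat" where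
  "approx_number M p \<epsilon> A =
     Inf (enat ` {k. 1 \<le> k \<and> (\<forall>f\<in>A. \<exists>h\<in>step_fun_set M p k. Lp_norm M p (\<lambda>x. f x - h x) \<le> \<epsilon>)})"

definition unif_approximable :: "'a measure \<Rightarrow> real \<Rightarrow> ('a \<Rightarrow> real) set \<Rightarrow> bool" where
  "unif_approximable M p A \<longleftrightarrow> (\<forall>\<epsilon>>0. approx_number M p \<epsilon> A < \<infinity>)"

end

theory Submission
  imports Defs
begin


lemma powr_sum_le:
  fixes a b p :: real
  assumes "0 \<le> a" "0 \<le> b" "0 < p"
  shows "(a + b) powr p \<le> 2 powr p * (a powr p + b powr p)"
proof -
  have "(a + b) powr p \<le> (2 * max a b) powr p"
    using assms by (intro powr_mono2) auto
  also have "\<dots> = 2 powr p * max a b powr p"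
    using assms by (simp add: powr_mult)
  also have "max a b powr p \<le> a powr p + b powr p"
    by (cases "a \<le> b") (auto simp: max_def)
  hence "2 powr p * max a b powr p \<le> 2 powr p * (a powr p + b powr p)"
    by (intro mult_left_mono) auto
  finally show ?thesis .
qed

lemma step_fun_from_finite:
  assumes h: "h \<in> Lp M p" and fin: "finite (h ` space M)" and k: "card (h ` space M) \<le> k"
  shows "h \<in> step_fun_set M p k"
proof -
  have hm[measurable]: "h \<in> borel_measurable M" using h by (simp add: Lp_def)
  define F where "F = h ` space M"
  obtain e where e: "bij_betw e {0..<card F} F"
    using ex_bij_betw_nat_finite fin F_def by blast
  define l where "l = card F"
  define S where "S i = {x\<in>space M. h x = e i}" for i
  have "\<forall>i<l. S i \<in> sets M" unfolding S_def by measurable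
  moreover have "disjoint_family_on S {..<l}"
    using e unfolding disjoint_family_on_def S_def bij_betw_def inj_on_def l_def by auto
  moreover have "(\<Union>i<l. S i) = space M"
  proof -
    { fix x assume x: "x \<in> space M"
      then have "h x \<in> F" by (simp add: F_def)
      then obtain i where "i < l" "e i = h x" using e unfolding bij_betw_def l_def by force
      then have "x \<in> S i" using x by (auto simp: S_def)
      then have "x \<in> (\<Union>i<l. S i)" using \<open>i < l\<close> by blast }
    then show ?thesis by (auto simp: S_def)
  qed
  moreover have "\<forall>x\<in>space M. h x = (\<Sum>i<l. e i * indicator (S i) x)"
  proof
    fix x assume x: "x \<in> space M"
    have "(\<Sum>i<l. e i * indicator (S i) x) = (\<Sum>i\<in>{0..<l}. (\<lambda>y. if y = h x then y else 0) (e i))"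
      using x by (intro sum.cong) (auto simp: S_def indicator_def)
    also have "\<dots> = (\<Sum>y\<in>F. if y = h x then y else 0)"
      using e l_def by (intro sum.reindex_bij_betw) auto
    also have "\<dots> = h x" using x fin by (simp add: F_def)
    finally show "h x = (\<Sum>i<l. e i * indicator (S i) x)" by simp
  qed
  ultimately show ?thesis unfolding step_fun_set_def using h k l_def F_def by blast
qed

lemma simple_approx:
  fixes g :: "'a \<Rightarrow> real"
  assumes g: "g \<in> Lp_plus M p" and p: "0 < p" and d: "0 < \<delta>"
  shows "\<exists>s. simple_function M s \<and> (\<forall>x\<in>space M. 0 \<le> s x \<and> s x \<le> 2 * g x) \<and>
     (\<integral>x. \<bar>g x - s x\<bar> powr p \<partial>M) < \<delta>"
proof -
  have gm[measurable]: "g \<in> borel_measurable M" and gi: "integrable M (\<lambda>x. \<bar>g x\<bar> powr p)"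
    and g0: "\<And>x. x \<in> space M \<Longrightarrow> 0 \<le> g x"
    using g by (auto simp: Lp_plus_def Lp_def)
  from borel_measurable_implies_sequence_metric[OF gm, of 0] obtain F where
    F0: "\<forall>i. simple_function M (F i)"
    and lim0: "\<forall>x\<in>space M. (\<lambda>i. F i x) \<longlonglongrightarrow> g x"
    and bd0: "\<forall>i. \<forall>x\<in>space M. dist (F i x) 0 \<le> 2 * dist (g x) 0"
    by blast
  have F: "\<And>i. simple_function M (F i)" using F0 by blast
  have lim: "\<And>x. x \<in> space M \<Longrightarrow> (\<lambda>i. F i x) \<longlonglongrightarrow> g x" using lim0 by blast
  have bd: "\<And>i x. x \<in> space M \<Longrightarrow> dist (F i x) 0 \<le> 2 * dist (g x) 0" using bd0 by blast
  define s where "s i x = \<bar>F i x\<bar>" for i x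
  have sm[measurable]: "s i \<in> borel_measurable M" for i
    unfolding s_def using borel_measurable_simple_function[OF F[of i]] by measurable
  have ss: "simple_function M (s i)" for i
    unfolding s_def using simple_function_compose1[OF F[of i], of abs] by simp
  have sb: "x \<in> space M \<Longrightarrow> 0 \<le> s i x \<and> s i x \<le> 2 * g x" for i x
    using bd[of x i] g0[of x] by (simp add: s_def dist_real_def)
  have conv: "(\<lambda>i. \<integral>x. \<bar>g x - s i x\<bar> powr p \<partial>M) \<longlonglongrightarrow> (\<integral>x. 0 \<partial>M)"
  proof (rule integral_dominated_convergence[where w="\<lambda>x. 3 powr p * \<bar>g x\<bar> powr p"])
    show "integrable M (\<lambda>x. 3 powr p * \<bar>g x\<bar> powr p)" using gi by simp
    show "AE x in M. (\<lambda>i. \<bar>g x - s i x\<bar> powr p) \<longlonglongrightarrow> 0"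
    proof (rule AE_I2)
      fix x assume x: "x \<in> space M"
      have "(\<lambda>i. s i x) \<longlonglongrightarrow> \<bar>g x\<bar>" unfolding s_def using lim[OF x] by (rule tendsto_rabs)
      then have "(\<lambda>i. s i x) \<longlonglongrightarrow> g x" using g0[OF x] by simp
      then have "(\<lambda>i. \<bar>g x - s i x\<bar>) \<longlonglongrightarrow> \<bar>g x - g x\<bar>" by (intro tendsto_intros)
      then have "(\<lambda>i. \<bar>g x - s i x\<bar>) \<longlonglongrightarrow> 0" by simp
      then show "(\<lambda>i. \<bar>g x - s i x\<bar> powr p) \<longlonglongrightarrow> 0"
        by (rule tendsto_zero_powrI[where g="\<lambda>_. p" and b=p]) (auto simp: p)
    qed
    show "AE x in M. norm (\<bar>g x - s i x\<bar> powr p) \<le> 3 powr p * \<bar>g x\<bar> powr p" for i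
    proof (rule AE_I2)
      fix x assume x: "x \<in> space M"
      have "\<bar>g x - s i x\<bar> \<le> 3 * \<bar>g x\<bar>" using sb[OF x, of i] g0[OF x] by auto
      then have "\<bar>g x - s i x\<bar> powr p \<le> (3 * \<bar>g x\<bar>) powr p" by (intro powr_mono2) (use p in auto)
      then show "norm (\<bar>g x - s i x\<bar> powr p) \<le> 3 powr p * \<bar>g x\<bar> powr p"
        by (simp add: powr_mult)
    qed
  qed auto
  then have "(\<lambda>i. \<integral>x. \<bar>g x - s i x\<bar> powr p \<partial>M) \<longlonglongrightarrow> 0" by simp
  then have "eventually (\<lambda>i. (\<integral>x. \<bar>g x - s i x\<bar> powr p \<partial>M) < \<delta>) sequentially"
    using d by (rule order_tendstoD)
  then obtain N where "\<forall>n\<ge>N. (\<integral>x. \<bar>g x - s n x\<bar> powr p \<partial>M) < \<delta>"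
    unfolding eventually_sequentially by blast
  then have i: "(\<integral>x. \<bar>g x - s N x\<bar> powr p \<partial>M) < \<delta>" by blast
  show ?thesis using ss[of N] sb[of _ N] i by blast
qed



lemma quant_real:
  fixes c t :: real and m :: nat
  assumes c: "0 \<le> c" and t: "\<bar>t\<bar> \<le> c" and m: "1 \<le> m"
  shows "\<bar>t - sgn t * c * real_of_int \<lfloor>\<bar>t\<bar> * real m / c\<rfloor> / real m\<bar> \<le> c / real m"
    and "\<bar>sgn t * c * real_of_int \<lfloor>\<bar>t\<bar> * real m / c\<rfloor> / real m\<bar> \<le> \<bar>t\<bar>"
    and "\<lfloor>\<bar>t\<bar> * real m / c\<rfloor> \<in> {0..int m}"
proof -
  define q where "q = \<bar>t\<bar> * real m / c"
  define n where "n = \<lfloor>q\<rfloor>"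
  have mpos: "0 < real m" using m by simp
  have q0: "0 \<le> q" using c by (simp add: q_def)
  have qm: "q \<le> real m"
  proof (cases "c = 0")
    case True then show ?thesis by (simp add: q_def)
  next
    case False
    then have "\<bar>t\<bar> / c \<le> 1" using c t by simp
    then have "\<bar>t\<bar> / c * real m \<le> 1 * real m" by (intro mult_right_mono) auto
    then show ?thesis by (simp add: q_def)
  qed
  have n1: "real_of_int n \<le> q" and n2: "q < real_of_int n + 1" unfolding n_def by linarith+
  have n0: "0 \<le> n" using q0 unfolding n_def by simp
  show "\<lfloor>\<bar>t\<bar> * real m / c\<rfloor> \<in> {0..int m}"
    using n0 qm unfolding n_def q_def by (simp add: floor_le_iff)
  have key: "0 \<le> \<bar>t\<bar> - c * real_of_int n / real m \<and> \<bar>t\<bar> - c * real_of_int n / real m \<le> c / real m"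
  proof (cases "c = 0")
    case True then show ?thesis using t by simp
  next
    case False
    then have cp: "0 < c" using c by simp
    have tq: "\<bar>t\<bar> = c * q / real m" using cp mpos by (simp add: q_def field_simps)
    have "c * real_of_int n / real m \<le> c * q / real m"
      using n1 cp mpos by (intro divide_right_mono mult_left_mono) auto
    moreover have "c * q / real m \<le> c * (real_of_int n + 1) / real m"
      using n2 cp mpos by (intro divide_right_mono mult_left_mono) auto
    ultimately show ?thesis unfolding tq by (simp add: add_divide_distrib distrib_left)
  qed
  have eq: "sgn t * c * real_of_int n / real m = sgn t * (c * real_of_int n / real m)" by simp
  have cn0: "0 \<le> c * real_of_int n / real m" using c n0 by simp
  show "\<bar>t - sgn t * c * real_of_int \<lfloor>\<bar>t\<bar> * real m / c\<rfloor> / real m\<bar> \<le> c / real m"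
    using key c mpos unfolding n_def[symmetric] q_def[symmetric] eq
    by (cases "t > 0"; cases "t < 0") (auto simp: sgn_real_def)
  show "\<bar>sgn t * c * real_of_int \<lfloor>\<bar>t\<bar> * real m / c\<rfloor> / real m\<bar> \<le> \<bar>t\<bar>"
    using key cn0 unfolding n_def[symmetric] q_def[symmetric] eq
    by (cases "t > 0"; cases "t < 0") (auto simp: sgn_real_def)
qed

lemma quantize:
  fixes s f :: "'a \<Rightarrow> real" and m :: nat
  assumes s: "simple_function M s" and s0: "\<forall>x\<in>space M. 0 \<le> s x"
    and si: "integrable M (\<lambda>x. \<bar>s x\<bar> powr p)" and f[measurable]: "f \<in> borel_measurable M"
    and m: "1 \<le> m" and p: "0 < p"
  shows "(\<lambda>x. sgn (max (- s x) (min (s x) (f x))) * s x *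
            real_of_int \<lfloor>\<bar>max (- s x) (min (s x) (f x))\<bar> * real m / s x\<rfloor> / real m)
        \<in> step_fun_set M p (3 * card (s ` space M) * (m + 1))"
proof -
  define fc where "fc x = max (- s x) (min (s x) (f x))" for x
  define h where "h x = sgn (fc x) * s x * real_of_int \<lfloor>\<bar>fc x\<bar> * real m / s x\<rfloor> / real m" for x
  have sm[measurable]: "s \<in> borel_measurable M" using s by (rule borel_measurable_simple_function)
  have fcm[measurable]: "fc \<in> borel_measurable M" unfolding fc_def by measurable
  have hm: "h \<in> borel_measurable M" unfolding h_def by measurable
  have fcs: "x \<in> space M \<Longrightarrow> \<bar>fc x\<bar> \<le> s x" for x using s0 by (auto simp: fc_def)
  have hb: "x \<in> space M \<Longrightarrow> \<bar>h x\<bar> \<le> \<bar>fc x\<bar>" for x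
    unfolding h_def using quant_real(2)[OF _ fcs m] s0 by auto
  have hL: "h \<in> Lp M p"
    unfolding Lp_def
  proof (intro CollectI conjI hm)
    show "integrable M (\<lambda>x. \<bar>h x\<bar> powr p)"
    proof (rule Bochner_Integration.integrable_bound[OF si])
      show "(\<lambda>x. \<bar>h x\<bar> powr p) \<in> borel_measurable M" using hm by measurable
      show "AE x in M. norm (\<bar>h x\<bar> powr p) \<le> norm (\<bar>s x\<bar> powr p)"
      proof (rule AE_I2)
        fix x assume x: "x \<in> space M"
        have "\<bar>h x\<bar> \<le> \<bar>s x\<bar>" using hb[OF x] fcs[OF x] by simp
        then show "norm (\<bar>h x\<bar> powr p) \<le> norm (\<bar>s x\<bar> powr p)"
          by (simp add: powr_mono2 p less_imp_le)
      qed
    qed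
  qed
  define V where "V = s ` space M"
  have finV: "finite V" using s by (simp add: simple_function_def V_def)
  define H where "H = (\<lambda>(\<sigma>, c, n). \<sigma> * c * real_of_int n / real m) ` ({-1, 0, 1} \<times> V \<times> {0..int m})"
  have sub: "h ` space M \<subseteq> H"
  proof
    fix y assume "y \<in> h ` space M"
    then obtain x where x: "x \<in> space M" and y: "y = h x" by blast
    have "sgn (fc x) \<in> {-1, 0, 1}" by (auto simp: sgn_real_def)
    moreover have "s x \<in> V" using x by (simp add: V_def)
    moreover have "\<lfloor>\<bar>fc x\<bar> * real m / s x\<rfloor> \<in> {0..int m}"
      using quant_real(3)[OF _ fcs[OF x] m] s0 x by auto
    ultimately show "y \<in> H" unfolding H_def y h_def
      by (intro image_eqI[where x="(sgn (fc x), s x, \<lfloor>\<bar>fc x\<bar> * real m / s x\<rfloor>)"]) auto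
  qed
  have finH: "finite H" using finV by (simp add: H_def)
  have "card H \<le> card ({-1::real, 0, 1} \<times> V \<times> {0..int m})"
    unfolding H_def by (rule card_image_le) (use finV in simp)
  also have "\<dots> = 3 * card V * (m + 1)"
    using finV by (simp add: card_cartesian_product nat_add_distrib algebra_simps)
  finally have cH: "card H \<le> 3 * card V * (m + 1)" .
  have "h \<in> step_fun_set M p (3 * card V * (m + 1))"
    using card_mono[OF finH sub] cH
    by (intro step_fun_from_finite[OF hL finite_subset[OF sub finH]]) linarith
  then show ?thesis unfolding h_def fc_def V_def .
qed



theorem proposition4p1:
  fixes M :: "'a measure" and p :: real and A :: "('a \<Rightarrow> real) set"
  assumes "emeasure M (space M) \<noteq> 0"
    and "1 \<le> p"
    and "A \<subseteq> Lp M p"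
    and "unif_integrable M p A"
  shows "unif_approximable M p A"
proof -
  have p0: "0 < p" using assms(2) by simp
  have sp: "space M \<noteq> {}" using assms(1) by auto
  show ?thesis unfolding unif_approximable_def
  proof (intro allI impI)
    fix \<epsilon> :: real assume ep: "\<epsilon> > 0"
    define \<delta> where "\<delta> = \<epsilon> powr p / (3 * 2 powr p)"
    have dp: "\<delta> > 0" using ep by (simp add: \<delta>_def)
    have "(INF g\<in>Lp_plus M p. SUP f\<in>A.
        (\<integral>\<^sup>+ x\<in>{x\<in>space M. \<bar>f x\<bar> > g x}. ennreal (\<bar>f x\<bar> powr p) \<partial>M)) < ennreal \<delta>"
      using assms(4) dp unfolding unif_integrable_def by simp
    then obtain g where g: "g \<in> Lp_plus M p" and gS: "(SUP f\<in>A.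
        (\<integral>\<^sup>+ x\<in>{x\<in>space M. \<bar>f x\<bar> > g x}. ennreal (\<bar>f x\<bar> powr p) \<partial>M)) < ennreal \<delta>"
      unfolding INF_less_iff by blast
    have UI: "(\<integral>\<^sup>+ x\<in>{x\<in>space M. \<bar>f x\<bar> > g x}. ennreal (\<bar>f x\<bar> powr p) \<partial>M) < ennreal \<delta>"
      if "f \<in> A" for f
      using gS SUP_upper[OF that, of "\<lambda>f. (\<integral>\<^sup>+ x\<in>{x\<in>space M. \<bar>f x\<bar> > g x}. ennreal (\<bar>f x\<bar> powr p) \<partial>M)"]
      by (rule le_less_trans[rotated])
    have gm[measurable]: "g \<in> borel_measurable M" and gi: "integrable M (\<lambda>x. \<bar>g x\<bar> powr p)"
      and g0: "\<And>x. x \<in> space M \<Longrightarrow> 0 \<le> g x"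
      using g by (auto simp: Lp_plus_def Lp_def)
    obtain s where s: "simple_function M s" and sb: "\<forall>x\<in>space M. 0 \<le> s x \<and> s x \<le> 2 * g x"
      and sI: "(\<integral>x. \<bar>g x - s x\<bar> powr p \<partial>M) < \<delta>"
      using simple_approx[OF g p0 dp] by blast
    have sm[measurable]: "s \<in> borel_measurable M" using s by (rule borel_measurable_simple_function)
    have si: "integrable M (\<lambda>x. \<bar>s x\<bar> powr p)"
    proof (rule Bochner_Integration.integrable_bound[where f="\<lambda>x. 2 powr p * \<bar>g x\<bar> powr p"])
      show "integrable M (\<lambda>x. 2 powr p * \<bar>g x\<bar> powr p)" using gi by simp
      show "AE x in M. norm (\<bar>s x\<bar> powr p) \<le> norm (2 powr p * \<bar>g x\<bar> powr p)"
      proof (rule AE_I2)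
        fix x assume x: "x \<in> space M"
        have "\<bar>s x\<bar> \<le> 2 * \<bar>g x\<bar>" using sb x g0[OF x] by auto
        then have "\<bar>s x\<bar> powr p \<le> (2 * \<bar>g x\<bar>) powr p" by (intro powr_mono2) (use p0 in auto)
        then show "norm (\<bar>s x\<bar> powr p) \<le> norm (2 powr p * \<bar>g x\<bar> powr p)" by (simp add: powr_mult)
      qed
    qed simp
    have Bi: "integrable M (\<lambda>x. \<bar>g x - s x\<bar> powr p)"
    proof (rule Bochner_Integration.integrable_bound[where f="\<lambda>x. 3 powr p * \<bar>g x\<bar> powr p"])
      show "integrable M (\<lambda>x. 3 powr p * \<bar>g x\<bar> powr p)" using gi by simp
      show "AE x in M. norm (\<bar>g x - s x\<bar> powr p) \<le> norm (3 powr p * \<bar>g x\<bar> powr p)"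
      proof (rule AE_I2)
        fix x assume x: "x \<in> space M"
        have "\<bar>g x - s x\<bar> \<le> 3 * \<bar>g x\<bar>" using sb x g0[OF x] by auto
        then have "\<bar>g x - s x\<bar> powr p \<le> (3 * \<bar>g x\<bar>) powr p" by (intro powr_mono2) (use p0 in auto)
        then show "norm (\<bar>g x - s x\<bar> powr p) \<le> norm (3 powr p * \<bar>g x\<bar> powr p)" by (simp add: powr_mult)
      qed
    qed simp
    define I where "I = (\<integral>x. \<bar>s x\<bar> powr p \<partial>M)"
    have I0: "0 \<le> I" unfolding I_def by (rule integral_nonneg_AE) auto
    define m :: nat where "m = nat \<lceil>I / \<delta>\<rceil> + 1"
    have m1: "1 \<le> m" by (simp add: m_def)
    have "I / \<delta> \<le> real m" unfolding m_def by linarith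
    then have Im: "I / real m \<le> \<delta>" using dp m1 by (simp add: field_simps)
    define k where "k = 3 * card (s ` space M) * (m + 1)"
    have "card (s ` space M) \<ge> 1"
      using s sp by (simp add: simple_function_def Suc_le_eq card_gt_0_iff)
    then have k1: "1 \<le> k" by (simp add: k_def)
    have good: "\<forall>f\<in>A. \<exists>h\<in>step_fun_set M p k. Lp_norm M p (\<lambda>x. f x - h x) \<le> \<epsilon>"
    proof
      fix f assume fA: "f \<in> A"
      have fm[measurable]: "f \<in> borel_measurable M" and fi: "integrable M (\<lambda>x. \<bar>f x\<bar> powr p)"
        using fA assms(3) by (auto simp: Lp_def)
      define fc where "fc x = max (- s x) (min (s x) (f x))" for x
      define h where "h = (\<lambda>x. sgn (fc x) * s x * real_of_int \<lfloor>\<bar>fc x\<bar> * real m / s x\<rfloor> / real m)"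
      have s0: "\<forall>x\<in>space M. 0 \<le> s x" using sb by blast
      have hS: "h \<in> step_fun_set M p k"
        unfolding h_def fc_def k_def by (rule quantize[OF s s0 si fm m1 p0])
      define S where "S = {x\<in>space M. \<bar>f x\<bar> > g x}"
      have Sm: "S \<in> sets M" unfolding S_def by measurable
      have Ai: "integrable M (\<lambda>x. \<bar>f x\<bar> powr p * indicator S x)"
        by (rule integrable_real_mult_indicator[OF Sm fi])
      have "ennreal (\<integral>x. \<bar>f x\<bar> powr p * indicator S x \<partial>M)
          = (\<integral>\<^sup>+x. ennreal (\<bar>f x\<bar> powr p * indicator S x) \<partial>M)"
        by (rule nn_integral_eq_integral[OF Ai, symmetric]) auto
      also have "\<dots> = (\<integral>\<^sup>+ x\<in>S. ennreal (\<bar>f x\<bar> powr p) \<partial>M)"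
        by (intro nn_integral_cong) (auto simp: indicator_def)
      also have "\<dots> < ennreal \<delta>" using UI[OF fA] by (simp add: S_def)
      finally have AI: "(\<integral>x. \<bar>f x\<bar> powr p * indicator S x \<partial>M) < \<delta>"
        using dp by (simp add: ennreal_less_iff)
      define W where "W x = 2 powr p * (\<bar>f x\<bar> powr p * indicator S x + \<bar>g x - s x\<bar> powr p
          + \<bar>s x\<bar> powr p / real m)" for x
      have Wi: "integrable M W" unfolding W_def using Ai Bi si by auto
      have IW: "(\<integral>x. W x \<partial>M) = 2 powr p * ((\<integral>x. \<bar>f x\<bar> powr p * indicator S x \<partial>M)
          + (\<integral>x. \<bar>g x - s x\<bar> powr p \<partial>M) + I / real m)"
        unfolding W_def I_def using Ai Bi si by simp
      have "2 powr p * ((\<integral>x. \<bar>f x\<bar> powr p * indicator S x \<partial>M)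
          + (\<integral>x. \<bar>g x - s x\<bar> powr p \<partial>M) + I / real m) \<le> 2 powr p * (\<delta> + \<delta> + \<delta>)"
        using AI sI Im by (intro mult_left_mono) auto
      also have "\<dots> = \<epsilon> powr p" by (simp add: \<delta>_def)
      finally have Wle: "(\<integral>x. W x \<partial>M) \<le> \<epsilon> powr p" using IW by simp
      have pw: "\<bar>f x - h x\<bar> powr p \<le> W x" if x: "x \<in> space M" for x
      proof -
        have sx: "0 \<le> s x" using s0 x by blast
        have fcs: "\<bar>fc x\<bar> \<le> s x" using sx by (auto simp: fc_def)
        have q1: "\<bar>fc x - h x\<bar> \<le> s x / real m" unfolding h_def using quant_real(1)[OF sx fcs m1] .
        have q2: "\<bar>h x\<bar> \<le> \<bar>fc x\<bar>" unfolding h_def using quant_real(2)[OF sx fcs m1] .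
        have q3: "\<bar>fc x\<bar> \<le> \<bar>f x\<bar>" using sx by (auto simp: fc_def)
        have W0: "0 \<le> \<bar>g x - s x\<bar> powr p + \<bar>s x\<bar> powr p / real m" by simp
        show ?thesis
        proof (cases "x \<in> S")
          case True
          have "\<bar>f x - h x\<bar> \<le> 2 * \<bar>f x\<bar>" using q2 q3 by linarith
          then have "\<bar>f x - h x\<bar> powr p \<le> (2 * \<bar>f x\<bar>) powr p" by (intro powr_mono2) (use p0 in auto)
          also have "\<dots> = 2 powr p * \<bar>f x\<bar> powr p" by (simp add: powr_mult)
          also have "\<dots> \<le> W x" unfolding W_def using True W0
            by (intro mult_left_mono) auto
          finally show ?thesis .
        next
          case False
          then have fg: "\<bar>f x\<bar> \<le> g x" using x by (auto simp: S_def)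
          have "\<bar>f x - fc x\<bar> \<le> \<bar>g x - s x\<bar>" using fg sx by (auto simp: fc_def)
          then have "\<bar>f x - h x\<bar> \<le> \<bar>g x - s x\<bar> + s x / real m" using q1 by linarith
          then have "\<bar>f x - h x\<bar> powr p \<le> (\<bar>g x - s x\<bar> + s x / real m) powr p"
            by (intro powr_mono2) (use p0 in auto)
          also have "\<dots> \<le> 2 powr p * (\<bar>g x - s x\<bar> powr p + (s x / real m) powr p)"
            by (rule powr_sum_le) (use p0 sx in auto)
          also have "(s x / real m) powr p \<le> \<bar>s x\<bar> powr p / real m"
          proof -
            have "real m = real m powr 1" using m1 by simp
            also have "\<dots> \<le> real m powr p" using m1 assms(2) by (intro powr_mono) auto
            finally have mp: "real m \<le> real m powr p" .
            have "(s x / real m) powr p = \<bar>s x\<bar> powr p / real m powr p" using sx by (simp add: powr_divide)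
            also have "\<dots> \<le> \<bar>s x\<bar> powr p / real m" using mp m1 by (intro divide_left_mono) auto
            finally show ?thesis .
          qed
          then have "2 powr p * (\<bar>g x - s x\<bar> powr p + (s x / real m) powr p)
              \<le> 2 powr p * (\<bar>g x - s x\<bar> powr p + \<bar>s x\<bar> powr p / real m)" by simp
          also have "\<dots> \<le> W x" unfolding W_def using False by simp
          finally show ?thesis by simp
        qed
      qed
      have "(\<integral>x. \<bar>f x - h x\<bar> powr p \<partial>M) \<le> (\<integral>x. W x \<partial>M)"
      proof (rule integral_mono_AE'[OF Wi])
        show "AE x in M. \<bar>f x - h x\<bar> powr p \<le> W x" using pw by (rule AE_I2)
        show "AE x in M. 0 \<le> W x" unfolding W_def by (rule AE_I2) simp
      qed
      then have int: "(\<integral>x. \<bar>f x - h x\<bar> powr p \<partial>M) \<le> \<epsilon> powr p" using Wle by linarith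
      have "Lp_norm M p (\<lambda>x. f x - h x) \<le> (\<epsilon> powr p) powr (1 / p)"
        unfolding Lp_norm_def using int p0 by (intro powr_mono2) (auto intro: integral_nonneg_AE)
      also have "\<dots> = \<epsilon>" using p0 ep by (simp add: powr_powr)
      finally show "\<exists>h\<in>step_fun_set M p k. Lp_norm M p (\<lambda>x. f x - h x) \<le> \<epsilon>" using hS by blast
    qed
    have "approx_number M p \<epsilon> A \<le> enat k"
      unfolding approx_number_def using good k1 by (intro Inf_lower) auto
    then show "approx_number M p \<epsilon> A < \<infinity>"
      using enat_ord_simps(4) order.strict_trans1 by blast
  qed
qed

end
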